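(* Assume (A1) and (A2) below. For a policy $\pi$, let $W_t^\pi$ be the solution of $$W_t^\pi(s)=\gamma^2w_t(s)+\gamma^2\sum_{a,s'}\pi(a\mid s)\bar p_t(s'\mid s,a)W_t^\pi(s'),\qquad w_t(s)=\mathbb{V}_{p\sim\Phi_t}\Big[\sum_{a,s'}\pi(a\mid s)p(s'\mid s,a)\bar V^\pi_t(s')\Big].$$ Then for every $s\in\mathcal S$, $W_t^\pi(s)\ge U_t^\pi(s)$, where $U_t^\pi(s)=\mathbb{V}_{p\sim\Phi_t}\big[V^{\pi,p}(s)\big]$.
   Context: Let $\mathcal S$ be a finite state space, $\mathcal A$ a finite action space, $r:\mathcal S\times\mathcal A\to\mathbb R$ a known bounded (deterministic) reward function and $\gamma\in[0,1)$ a discount factor. A transition function $p$ assigns to each $(s,a)$ a probability distribution $p(\cdot\mid s,a)$ on $\mathcal S$. A policy $\pi$ gives distributions $\pi(\cdot\mid s)$ on $\mathcal A$. For a transition function $p$, the value function is $V^{\pi,p}(s)=\mathbb E\big[\sum_{h\ge 0}\gamma^h r(s_h,a_h)\mid s_0=s\big]$ with $a_h\sim\pi(\cdot\mid s_h)$, $s_{h+1}\sim p(\cdot\mid s_h,a_h)$. The transition function $p$ is a random variable with (posterior) distribution $\Phi_t$. Define $\bar p_t(s'\mid s,a)=\mathbb E_{p\sim\Phi_t}[p(s'\mid s,a)]$ and $\bar V^\pi_t(s)=\mathbb E_{p\sim\Phi_t}[V^{\pi,p}(s)]$. Assumptions: (A1) (independent transitions) $p(s'\mid x,a)$ and $p(s'\mid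 y,a)$ are independent random variables if $x\neq y$; (A2) (acyclic MDP) the MDP is a directed acyclic graph, i.e., states are not visited more than once in any given episode. *)

theory Defs
  imports "HOL-Probability.Probability"
begin

text \<open>Finite MDP with state type 's and action type 'a (both finite).
  A transition function p is encoded as p s a s' = p(s' | s, a);
  a policy pi as pi s a = pi(a | s); a reward function as r s a.\<close>

definition is_transition :: "('s::finite \<Rightarrow> 'a::finite \<Rightarrow> 's \<Rightarrow> real) \<Rightarrow> bool" where
  "is_transition p \<longleftrightarrow> (\<forall>s a. (\<forall>s'. 0 \<le> p s a s') \<and> (\<Sum>s'\<in>UNIV. p s a s') = 1)"

definition is_policy :: "('s::finite \<Rightarrow> 'a::finite \<Rightarrow> real) \<Rightarrow> bool" where
  "is_policy \<pi> \<longleftrightarrow> (\<forall>s. (\<forall>a. 0 \<le> \<pi> s a) \<and> (\<Sum>a\<in>UNIV. \<pi> s a) = 1)"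

fun state_dist :: "('s::finite \<Rightarrow> 'a::finite \<Rightarrow> real) \<Rightarrow> ('s \<Rightarrow> 'a \<Rightarrow> 's \<Rightarrow> real)
    \<Rightarrow> 's \<Rightarrow> nat \<Rightarrow> 's \<Rightarrow> real" where
  "state_dist \<pi> p s 0 = (\<lambda>x. if x = s then 1 else 0)"
| "state_dist \<pi> p s (Suc h) =
     (\<lambda>y. \<Sum>x\<in>UNIV. state_dist \<pi> p s h x * (\<Sum>a\<in>UNIV. \<pi> x a * p x a y))"

text \<open>V^{pi,p}(s) = E[ sum_h gamma^h r(s_h,a_h) | s_0 = s ], the expectation of each
  summand written out via the state distribution at step h.\<close>
definition value_fun :: "real \<Rightarrow> ('s::finite \<Rightarrow> 'a::finite \<Rightarrow> real) \<Rightarrow> ('s \<Rightarrow> 'a \<Rightarrow> real)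
    \<Rightarrow> ('s \<Rightarrow> 'a \<Rightarrow> 's \<Rightarrow> real) \<Rightarrow> 's \<Rightarrow> real" where
  "value_fun \<gamma> r \<pi> p s =
     (\<Sum>h. \<gamma> ^ h * (\<Sum>x\<in>UNIV. state_dist \<pi> p s h x * (\<Sum>a\<in>UNIV. \<pi> x a * r x a)))"

definition var_of :: "'w measure \<Rightarrow> ('w \<Rightarrow> real) \<Rightarrow> real" where
  "var_of M X = (\<integral>\<omega>. (X \<omega> - (\<integral>\<omega>'. X \<omega>' \<partial>M))\<^sup>2 \<partial>M)"

definition mean_trans :: "'w measure \<Rightarrow> ('w \<Rightarrow> 's \<Rightarrow> 'a \<Rightarrow> 's \<Rightarrow> real) \<Rightarrow> 's \<Rightarrow> 'a \<Rightarrow> 's \<Rightarrow> real" where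
  "mean_trans M P s a s' = (\<integral>\<omega>. P \<omega> s a s' \<partial>M)"

definition mean_value :: "'w measure \<Rightarrow> ('w \<Rightarrow> 's::finite \<Rightarrow> 'a::finite \<Rightarrow> 's \<Rightarrow> real) \<Rightarrow> real
    \<Rightarrow> ('s \<Rightarrow> 'a \<Rightarrow> real) \<Rightarrow> ('s \<Rightarrow> 'a \<Rightarrow> real) \<Rightarrow> 's \<Rightarrow> real" where
  "mean_value M P \<gamma> r \<pi> s = (\<integral>\<omega>. value_fun \<gamma> r \<pi> (P \<omega>) s \<partial>M)"

definition local_unc :: "'w measure \<Rightarrow> ('w \<Rightarrow> 's::finite \<Rightarrow> 'a::finite \<Rightarrow> 's \<Rightarrow> real) \<Rightarrow> real
    \<Rightarrow> ('s \<Rightarrow> 'a \<Rightarrow> real) \<Rightarrow> ('s \<Rightarrow> 'a \<Rightarrow> real) \<Rightarrow> 's \<Rightarrow> real" where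
  "local_unc M P \<gamma> r \<pi> s =
     var_of M (\<lambda>\<omega>. \<Sum>a\<in>UNIV. \<Sum>s'\<in>UNIV. \<pi> s a * P \<omega> s a s' * mean_value M P \<gamma> r \<pi> s')"

definition value_var :: "'w measure \<Rightarrow> ('w \<Rightarrow> 's::finite \<Rightarrow> 'a::finite \<Rightarrow> 's \<Rightarrow> real) \<Rightarrow> real
    \<Rightarrow> ('s \<Rightarrow> 'a \<Rightarrow> real) \<Rightarrow> ('s \<Rightarrow> 'a \<Rightarrow> real) \<Rightarrow> 's \<Rightarrow> real" where
  "value_var M P \<gamma> r \<pi> s = var_of M (\<lambda>\<omega>. value_fun \<gamma> r \<pi> (P \<omega>) s)"

text \<open>(A2) Acyclic (episodic) MDP: apart from a set T of terminal states (absorbing, reward 0,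
  i.e. the episode has ended), every transition with positive probability strictly decreases
  a fixed rank function rk, so no non-terminal state is visited twice in an episode.\<close>
definition acyclic_mdp :: "'s set \<Rightarrow> ('s \<Rightarrow> nat) \<Rightarrow> ('s \<Rightarrow> 'a \<Rightarrow> real)
    \<Rightarrow> ('s \<Rightarrow> 'a \<Rightarrow> 's \<Rightarrow> real) \<Rightarrow> bool" where
  "acyclic_mdp T rk r p \<longleftrightarrow>
     (\<forall>s a. (s \<in> T \<longrightarrow> r s a = 0 \<and> p s a s = 1) \<and>
            (s \<notin> T \<longrightarrow> (\<forall>s'. 0 < p s a s' \<longrightarrow> rk s' < rk s)))"

end

theory Submission
  imports Defs
begin


definition qq :: "('s::finite \<Rightarrow> 'a::finite \<Rightarrow> real) \<Rightarrow> ('s \<Rightarrow> 'a \<Rightarrow> 's \<Rightarrow> real) \<Rightarrow> 's \<Rightarrow> 's \<Rightarrow> real" where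
  "qq \<pi> p x y = (\<Sum>a\<in>UNIV. \<pi> x a * p x a y)"

definition Rc :: "('s::finite \<Rightarrow> 'a::finite \<Rightarrow> real) \<Rightarrow> ('s \<Rightarrow> 'a \<Rightarrow> real) \<Rightarrow> 's \<Rightarrow> real" where
  "Rc \<pi> r x = (\<Sum>a\<in>UNIV. \<pi> x a * r x a)"

lemma sum_delta1: "(\<Sum>x\<in>(UNIV::'s::finite set). (if x = s then 1 else 0) * f x) = (f s :: real)"
proof -
  have "(\<Sum>x\<in>UNIV. (if x = s then 1 else 0) * f x) = (\<Sum>x\<in>UNIV. if x = s then f x else 0)"
    by (rule sum.cong) auto
  then show ?thesis by simp
qed

lemma sum_delta2: "(\<Sum>x\<in>(UNIV::'s::finite set). f x * (if z = x then 1 else 0)) = (f z :: real)"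
proof -
  have "(\<Sum>x\<in>UNIV. f x * (if z = x then 1 else 0)) = (\<Sum>x\<in>UNIV. if z = x then f x else 0)"
    by (rule sum.cong) auto
  then show ?thesis by simp
qed

lemma swap2: "(\<Sum>y\<in>(UNIV::'s::finite set). \<Sum>x\<in>(UNIV::'t::finite set). f x * g x y) = (\<Sum>x\<in>UNIV. f x * (\<Sum>y\<in>UNIV. (g x y::real)))"
  by (subst sum.swap) (simp add: sum_distrib_left)

lemma sd_Suc: "state_dist \<pi> p s (Suc h) y = (\<Sum>x\<in>UNIV. state_dist \<pi> p s h x * qq \<pi> p x y)"
  by (simp add: qq_def)

lemma qq_nonneg: "is_policy \<pi> \<Longrightarrow> is_transition p \<Longrightarrow> 0 \<le> qq \<pi> p x y"
  unfolding qq_def is_policy_def is_transition_def by (auto intro!: sum_nonneg)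

lemma qq_sum: "is_policy \<pi> \<Longrightarrow> is_transition p \<Longrightarrow> (\<Sum>y\<in>UNIV. qq \<pi> p x y) = 1"
proof -
  assume a: "is_policy \<pi>" "is_transition p"
  have "(\<Sum>y\<in>UNIV. qq \<pi> p x y) = (\<Sum>a\<in>UNIV. \<pi> x a * (\<Sum>y\<in>UNIV. p x a y))"
    unfolding qq_def by (rule swap2)
  also have "\<dots> = 1" using a unfolding is_policy_def is_transition_def by simp
  finally show ?thesis .
qed

lemma sd_nonneg: "is_policy \<pi> \<Longrightarrow> is_transition p \<Longrightarrow> 0 \<le> state_dist \<pi> p s h x"
  by (induction h arbitrary: x) (auto simp del: state_dist.simps(2) simp: sd_Suc intro!: sum_nonneg mult_nonneg_nonneg qq_nonneg)

lemma sd_sum: "is_policy \<pi> \<Longrightarrow> is_transition p \<Longrightarrow> (\<Sum>x\<in>UNIV. state_dist \<pi> p s h x) = 1"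
proof (induction h)
  case 0
  then show ?case by simp
next
  case (Suc h)
  have "(\<Sum>y\<in>UNIV. state_dist \<pi> p s (Suc h) y) = (\<Sum>x\<in>UNIV. state_dist \<pi> p s h x * (\<Sum>y\<in>UNIV. qq \<pi> p x y))"
    by (simp only: sd_Suc swap2)
  also have "\<dots> = 1" using Suc by (simp add: qq_sum)
  finally show ?case .
qed

lemma sd_le1: "is_policy \<pi> \<Longrightarrow> is_transition p \<Longrightarrow> state_dist \<pi> p s h x \<le> 1"
proof -
  assume a: "is_policy \<pi>" "is_transition p"
  have "state_dist \<pi> p s h x \<le> (\<Sum>x\<in>UNIV. state_dist \<pi> p s h x)"
    by (rule member_le_sum) (auto intro: sd_nonneg[OF a])
  then show ?thesis using sd_sum[OF a] by simp
qed

lemma swap_aux: "(\<Sum>z\<in>(UNIV::'s::finite set). (\<Sum>y\<in>(UNIV::'t::finite set). a y * b y z) * c z) = (\<Sum>y\<in>UNIV. a y * (\<Sum>z\<in>UNIV. b y z * (c z::real)))"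
proof -
  have "(\<Sum>z\<in>(UNIV::'s::finite set). (\<Sum>y\<in>(UNIV::'t::finite set). a y * b y z) * c z) = (\<Sum>z\<in>UNIV. \<Sum>y\<in>UNIV. a y * (b y z * c z))"
    by (simp add: sum_distrib_right mult.assoc)
  also have "\<dots> = (\<Sum>y\<in>UNIV. \<Sum>z\<in>UNIV. a y * (b y z * c z))" by (rule sum.swap)
  also have "\<dots> = (\<Sum>y\<in>UNIV. a y * (\<Sum>z\<in>UNIV. b y z * (c z::real)))" by (simp add: sum_distrib_left)
  finally show ?thesis .
qed

lemma sd_CK: "state_dist \<pi> p s (Suc h) z = (\<Sum>y\<in>UNIV. qq \<pi> p s y * state_dist \<pi> p y h z)"
proof (induction h arbitrary: z)
  case 0
  show ?case by (simp add: qq_def sum_delta1 sum_delta2)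
next
  case (Suc h)
  have "state_dist \<pi> p s (Suc (Suc h)) z = (\<Sum>x\<in>UNIV. (\<Sum>y\<in>UNIV. qq \<pi> p s y * state_dist \<pi> p y h x) * qq \<pi> p x z)"
    by (simp only: sd_Suc[of _ _ _ "Suc h"] Suc)
  also have "\<dots> = (\<Sum>y\<in>UNIV. qq \<pi> p s y * (\<Sum>x\<in>UNIV. state_dist \<pi> p y h x * qq \<pi> p x z))"
    by (simp add: swap_aux)
  also have "\<dots> = (\<Sum>y\<in>UNIV. qq \<pi> p s y * state_dist \<pi> p y (Suc h) z)"
    by (simp only: sd_Suc)
  finally show ?case .
qed

definition term_v where
  "term_v \<gamma> r \<pi> p s h = \<gamma> ^ h * (\<Sum>x\<in>UNIV. state_dist \<pi> p s h x * Rc \<pi> r x)"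

lemma value_fun_term: "value_fun \<gamma> r \<pi> p s = (\<Sum>h. term_v \<gamma> r \<pi> p s h)"
  unfolding value_fun_def term_v_def Rc_def ..

definition Rb where "Rb \<pi> r = (\<Sum>x\<in>UNIV. \<bar>Rc \<pi> r x\<bar>)"

lemma term_bound:
  assumes "is_policy \<pi>" "is_transition p" "0 \<le> \<gamma>"
  shows "\<bar>term_v \<gamma> r \<pi> p s h\<bar> \<le> \<gamma> ^ h * Rb \<pi> r"
proof -
  have "\<bar>\<Sum>x\<in>UNIV. state_dist \<pi> p s h x * Rc \<pi> r x\<bar> \<le> (\<Sum>x\<in>UNIV. \<bar>state_dist \<pi> p s h x * Rc \<pi> r x\<bar>)"
    by (rule sum_abs)
  also have "\<dots> \<le> Rb \<pi> r" unfolding Rb_def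
    by (rule sum_mono) (auto simp: abs_mult sd_nonneg[OF assms(1,2)] intro!: mult_left_le_one_le sd_le1[OF assms(1,2)])
  finally show ?thesis unfolding term_v_def using assms(3)
    by (simp add: abs_mult mult_left_mono)
qed

lemma term_summable:
  assumes "is_policy \<pi>" "is_transition p" "0 \<le> \<gamma>" "\<gamma> < 1"
  shows "summable (term_v \<gamma> r \<pi> p s)"
proof (rule summable_comparison_test[where g="\<lambda>h. \<gamma> ^ h * Rb \<pi> r"])
  show "\<exists>N. \<forall>n\<ge>N. norm (term_v \<gamma> r \<pi> p s n) \<le> \<gamma> ^ n * Rb \<pi> r"
    by (intro exI[of _ 0] allI impI) (simp add: term_bound[OF assms(1-3)])
  show "summable (\<lambda>h. \<gamma> ^ h * Rb \<pi> r)"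
    using assms by (intro summable_mult2 summable_geometric) simp
qed

lemma value_bound:
  assumes "is_policy \<pi>" "is_transition p" "0 \<le> \<gamma>" "\<gamma> < 1"
  shows "\<bar>value_fun \<gamma> r \<pi> p s\<bar> \<le> Rb \<pi> r / (1 - \<gamma>)"
proof -
  have s2: "summable (\<lambda>h. \<gamma> ^ h * Rb \<pi> r)"
    using assms by (intro summable_mult2 summable_geometric) simp
  have "\<bar>value_fun \<gamma> r \<pi> p s\<bar> \<le> (\<Sum>h. \<gamma> ^ h * Rb \<pi> r)"
  proof -
    have s1: "summable (\<lambda>h. \<bar>term_v \<gamma> r \<pi> p s h\<bar>)"
      by (rule summable_rabs_comparison_test[OF _ s2]) (use term_bound[OF assms(1-3)] in blast)
    have "\<bar>\<Sum>h. term_v \<gamma> r \<pi> p s h\<bar> \<le> (\<Sum>h. \<bar>term_v \<gamma> r \<pi> p s h\<bar>)"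
      by (rule summable_rabs[OF s1])
    also have "\<dots> \<le> (\<Sum>h. \<gamma> ^ h * Rb \<pi> r)"
      by (rule suminf_le[OF _ s1 s2]) (rule term_bound[OF assms(1-3)])
    finally show ?thesis unfolding value_fun_term .
  qed
  also have "\<dots> = Rb \<pi> r / (1 - \<gamma>)"
  proof -
    have g: "norm \<gamma> < 1" using assms by simp
    have "(\<Sum>h. \<gamma> ^ h * Rb \<pi> r) = (\<Sum>h. \<gamma> ^ h) * Rb \<pi> r"
      by (rule suminf_mult2[symmetric, OF summable_geometric[OF g]])
    then show ?thesis using suminf_geometric[OF g] by simp
  qed
  finally show ?thesis .
qed

lemma bellman:
  assumes "is_policy \<pi>" "is_transition p" "0 \<le> \<gamma>" "\<gamma> < 1"
  shows "value_fun \<gamma> r \<pi> p s = Rc \<pi> r s + \<gamma> * (\<Sum>y\<in>UNIV. qq \<pi> p s y * value_fun \<gamma> r \<pi> p y)"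
proof -
  note sm = term_summable[OF assms, where r=r]
  have "value_fun \<gamma> r \<pi> p s = term_v \<gamma> r \<pi> p s 0 + (\<Sum>h. term_v \<gamma> r \<pi> p s (Suc h))"
    unfolding value_fun_term using suminf_split_head[OF sm[where s=s]] by simp
  also have "term_v \<gamma> r \<pi> p s 0 = Rc \<pi> r s" by (simp add: term_v_def sum_delta1)
  also have "(\<lambda>h. term_v \<gamma> r \<pi> p s (Suc h)) = (\<lambda>h. \<Sum>y\<in>UNIV. \<gamma> * (qq \<pi> p s y * term_v \<gamma> r \<pi> p y h))"
    unfolding term_v_def sd_CK swap_aux by (simp add: sum_distrib_left mult_ac del: state_dist.simps)
  also have "(\<Sum>h. \<Sum>y\<in>UNIV. \<gamma> * (qq \<pi> p s y * term_v \<gamma> r \<pi> p y h)) = (\<Sum>y\<in>UNIV. \<Sum>h. \<gamma> * (qq \<pi> p s y * term_v \<gamma> r \<pi> p y h))"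
    by (rule suminf_sum) (intro summable_mult sm)
  also have "\<dots> = (\<Sum>y\<in>UNIV. \<gamma> * (qq \<pi> p s y * value_fun \<gamma> r \<pi> p y))"
    by (simp add: suminf_mult[OF sm] suminf_mult[OF summable_mult[OF sm]] value_fun_term)
  finally show ?thesis by (simp add: sum_distrib_left)
qed



abbreviation Mx :: "('a \<Rightarrow> 's \<Rightarrow> real) measure" where
  "Mx \<equiv> Pi\<^sub>M UNIV (\<lambda>_. Pi\<^sub>M UNIV (\<lambda>_. borel))"

lemma comp3_meas_gen: "x \<in> I \<Longrightarrow> (\<lambda>p. p x a y) \<in> borel_measurable (Pi\<^sub>M I (\<lambda>_::'s. (Mx :: ('a \<Rightarrow> 's \<Rightarrow> real) measure)))"
proof -
  assume xI: "x \<in> I"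
  have 1: "(\<lambda>p. p x) \<in> measurable (Pi\<^sub>M I (\<lambda>_::'s. (Mx :: ('a \<Rightarrow> 's \<Rightarrow> real) measure))) Mx"
    by (rule measurable_component_singleton) (rule xI)
  have 2: "(\<lambda>f. f a) \<in> measurable (Mx :: ('a \<Rightarrow> 's \<Rightarrow> real) measure) (Pi\<^sub>M UNIV (\<lambda>_. borel))"
    by (rule measurable_component_singleton) simp
  have 3: "(\<lambda>g. g y) \<in> borel_measurable (Pi\<^sub>M UNIV (\<lambda>_::'s. (borel :: real measure)))"
    by (rule measurable_component_singleton) simp
  show ?thesis using measurable_comp[OF measurable_comp[OF 1 2] 3] by (simp add: o_def)
qed

lemma comp3_meas[measurable]: "(\<lambda>p. p x a y) \<in> borel_measurable (Pi\<^sub>M UNIV (\<lambda>_::'s. (Mx :: ('a \<Rightarrow> 's \<Rightarrow> real) measure)))"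
  by (rule comp3_meas_gen) simp

lemma sd_meas: "(\<lambda>p. state_dist \<pi> p s h x) \<in> borel_measurable (Pi\<^sub>M UNIV (\<lambda>_::'s::finite. (Mx :: ('a::finite \<Rightarrow> 's \<Rightarrow> real) measure)))"
proof (induction h arbitrary: x)
  case 0
  then show ?case by simp
next
  case (Suc h)
  note [measurable] = Suc
  show ?case by simp measurable
qed

lemma vf_meas: "(\<lambda>p. value_fun \<gamma> r \<pi> p s) \<in> borel_measurable (Pi\<^sub>M UNIV (\<lambda>_::'s::finite. (Mx :: ('a::finite \<Rightarrow> 's \<Rightarrow> real) measure)))"
  unfolding value_fun_def
  by (rule borel_measurable_suminf)
     (intro borel_measurable_times borel_measurable_const borel_measurable_sum sd_meas)

lemma term_zero:
  assumes "is_transition p" "p x a x = 1" "z \<noteq> x"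
  shows "p x a z = 0"
proof -
  have nn: "\<forall>y. 0 \<le> p x a y" and s1: "(\<Sum>y\<in>UNIV. p x a y) = 1"
    using assms(1) unfolding is_transition_def by auto
  have "(\<Sum>y\<in>UNIV. p x a y) = p x a x + (\<Sum>y\<in>UNIV - {x}. p x a y)"
    by (simp add: sum.remove)
  then have "(\<Sum>y\<in>UNIV - {x}. p x a y) = 0" using s1 assms(2) by simp
  then have "\<forall>y\<in>UNIV - {x}. p x a y = 0"
    using sum_nonneg_eq_0_iff[of "UNIV - {x}" "p x a"] nn by simp
  then show ?thesis using assms(3) by simp
qed

lemma sd_support:
  assumes pol: "is_policy \<pi>" and tr: "is_transition p" and ac: "acyclic_mdp T rk r p"
  shows "state_dist \<pi> p y h z \<noteq> 0 \<Longrightarrow> rk z \<le> rk y"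
proof (induction h arbitrary: z)
  case 0
  then show ?case by (simp split: if_splits)
next
  case (Suc h)
  have "(\<Sum>x\<in>UNIV. state_dist \<pi> p y h x * qq \<pi> p x z) \<noteq> 0"
    using Suc.prems sd_Suc[of \<pi> p y h z] by metis
  then obtain x where x1: "state_dist \<pi> p y h x \<noteq> 0" and x2: "qq \<pi> p x z \<noteq> 0"
    by (metis (no_types, lifting) mult_eq_0_iff sum.neutral)
  from x2 obtain a where a1: "\<pi> x a \<noteq> 0" and a2: "p x a z \<noteq> 0"
    unfolding qq_def by (metis (no_types, lifting) mult_eq_0_iff sum.neutral)
  have rx: "rk x \<le> rk y" using Suc.IH[OF x1] .
  show ?case
  proof (cases "x \<in> T")
    case True
    then have "p x a x = 1" using ac unfolding acyclic_mdp_def by blast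
    then have "z = x" using term_zero[OF tr] a2 by blast
    then show ?thesis using rx by simp
  next
    case False
    have "0 < p x a z" using a2 tr unfolding is_transition_def by (simp add: order_less_le)
    then have "rk z < rk x" using False ac unfolding acyclic_mdp_def by blast
    then show ?thesis using rx by simp
  qed
qed

lemma sd_local:
  assumes pol: "is_policy \<pi>" and tr: "is_transition p" and ac: "acyclic_mdp T rk r p"
    and agree: "\<And>x. rk x \<le> rk y \<Longrightarrow> p' x = p x"
  shows "state_dist \<pi> p' y h = state_dist \<pi> p y h"
proof (induction h)
  case 0
  then show ?case by simp
next
  case (Suc h)
  show ?case
  proof
    fix z
    have "state_dist \<pi> p' y (Suc h) z = (\<Sum>x\<in>UNIV. state_dist \<pi> p y h x * qq \<pi> p' x z)"
      by (simp only: sd_Suc Suc.IH)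
    also have "\<dots> = (\<Sum>x\<in>UNIV. state_dist \<pi> p y h x * qq \<pi> p x z)"
    proof (rule sum.cong)
      fix x
      show "state_dist \<pi> p y h x * qq \<pi> p' x z = state_dist \<pi> p y h x * qq \<pi> p x z"
      proof (cases "state_dist \<pi> p y h x = 0")
        case False
        then have "rk x \<le> rk y" using sd_support[OF pol tr ac] by blast
        then show ?thesis using agree unfolding qq_def by simp
      qed simp
    qed simp
    also have "\<dots> = state_dist \<pi> p y (Suc h) z" by (simp only: sd_Suc)
    finally show "state_dist \<pi> p' y (Suc h) z = state_dist \<pi> p y (Suc h) z" .
  qed
qed

lemma vf_local:
  assumes pol: "is_policy \<pi>" and tr: "is_transition p" and ac: "acyclic_mdp T rk r p"
    and agree: "\<And>x. rk x \<le> rk y \<Longrightarrow> p' x = p x"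
  shows "value_fun \<gamma> r \<pi> p' y = value_fun \<gamma> r \<pi> p y"
  unfolding value_fun_def using sd_local[OF assms] by simp

lemma vf_terminal:
  assumes pol: "is_policy \<pi>" and tr: "is_transition p" and ac: "acyclic_mdp T rk r p"
    and g: "0 \<le> \<gamma>" "\<gamma> < 1" and sT: "s \<in> T"
  shows "value_fun \<gamma> r \<pi> p s = 0"
proof -
  have r0: "Rc \<pi> r s = 0" using ac sT unfolding acyclic_mdp_def Rc_def by simp
  have q: "qq \<pi> p s y = (if y = s then 1 else 0)" for y
  proof (cases "y = s")
    case True
    then show ?thesis using ac sT pol unfolding acyclic_mdp_def qq_def is_policy_def by simp
  next
    case False
    have "p s a y = 0" for a
      using term_zero[OF tr _ False] ac sT unfolding acyclic_mdp_def by blast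
    then show ?thesis using False unfolding qq_def by simp
  qed
  have "value_fun \<gamma> r \<pi> p s = \<gamma> * value_fun \<gamma> r \<pi> p s"
    using bellman[OF pol tr g, of r s] by (simp add: r0 q sum_delta1[of s])
  then show ?thesis using g by (metis mult_cancel_right1 mult.commute less_irrefl)
qed



definition bdd_on :: "'w measure \<Rightarrow> ('w \<Rightarrow> real) \<Rightarrow> bool" where
  "bdd_on M f \<longleftrightarrow> (\<exists>C. \<forall>\<omega>\<in>space M. \<bar>f \<omega>\<bar> \<le> C)"

lemma bdd_const: "bdd_on M (\<lambda>\<omega>. c)"
  unfolding bdd_on_def by auto

lemma bdd_add: "bdd_on M f \<Longrightarrow> bdd_on M g \<Longrightarrow> bdd_on M (\<lambda>\<omega>. f \<omega> + g \<omega>)"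
  unfolding bdd_on_def by (metis abs_triangle_ineq add_mono order_trans)

lemma bdd_diff: "bdd_on M f \<Longrightarrow> bdd_on M g \<Longrightarrow> bdd_on M (\<lambda>\<omega>. f \<omega> - g \<omega>)"
  unfolding bdd_on_def by (metis abs_triangle_ineq4 add_mono order_trans)

lemma bdd_mult: "bdd_on M f \<Longrightarrow> bdd_on M g \<Longrightarrow> bdd_on M (\<lambda>\<omega>. f \<omega> * g \<omega>)"
proof -
  assume "bdd_on M f" "bdd_on M g"
  then obtain C1 C2 where c1: "\<forall>\<omega>\<in>space M. \<bar>f \<omega>\<bar> \<le> C1" and c2: "\<forall>\<omega>\<in>space M. \<bar>g \<omega>\<bar> \<le> C2"
    unfolding bdd_on_def by blast
  have "\<forall>\<omega>\<in>space M. \<bar>f \<omega> * g \<omega>\<bar> \<le> max C1 0 * max C2 0"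
  proof
    fix \<omega> assume "\<omega> \<in> space M"
    then have "\<bar>f \<omega>\<bar> \<le> max C1 0" "\<bar>g \<omega>\<bar> \<le> max C2 0" using c1 c2 by force+
    then show "\<bar>f \<omega> * g \<omega>\<bar> \<le> max C1 0 * max C2 0"
      by (simp add: abs_mult mult_mono)
  qed
  then show ?thesis unfolding bdd_on_def by blast
qed

lemma bdd_sum: "finite I \<Longrightarrow> (\<And>i. i \<in> I \<Longrightarrow> bdd_on M (f i)) \<Longrightarrow> bdd_on M (\<lambda>\<omega>. \<Sum>i\<in>I. f i \<omega>)"
proof (induction I rule: finite_induct)
  case empty
  then show ?case by (simp add: bdd_const)
next
  case (insert x F)
  then show ?case by (simp add: bdd_add)
qed

lemma bdd_pow2: "bdd_on M f \<Longrightarrow> bdd_on M (\<lambda>\<omega>. (f \<omega>)\<^sup>2)"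
  unfolding power2_eq_square by (rule bdd_mult)

lemmas bdd_intros = bdd_const bdd_add bdd_diff bdd_mult bdd_sum bdd_pow2

lemma (in prob_space) integrable_bdd:
  assumes "f \<in> borel_measurable M" "bdd_on M f"
  shows "integrable M f"
proof -
  obtain C where "\<forall>\<omega>\<in>space M. \<bar>f \<omega>\<bar> \<le> C" using assms(2) unfolding bdd_on_def by blast
  then show ?thesis
    by (intro integrable_const_bound[where B=C] assms(1) AE_I2) auto
qed

lemma weighted_sq:
  fixes q d :: "'s \<Rightarrow> real"
  assumes "finite S" "\<And>y. y \<in> S \<Longrightarrow> 0 \<le> q y" "(\<Sum>y\<in>S. q y) = 1"
  shows "(\<Sum>y\<in>S. q y * d y)\<^sup>2 \<le> (\<Sum>y\<in>S. q y * (d y)\<^sup>2)"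
proof -
  define z where "z = (\<Sum>y\<in>S. q y * d y)"
  have "0 \<le> (\<Sum>y\<in>S. q y * (d y - z)\<^sup>2)"
    using assms by (intro sum_nonneg mult_nonneg_nonneg) auto
  also have "(\<Sum>y\<in>S. q y * (d y - z)\<^sup>2) = (\<Sum>y\<in>S. q y * (d y)\<^sup>2 - 2 * z * (q y * d y) + z\<^sup>2 * q y)"
    by (rule sum.cong) (auto simp: power2_diff algebra_simps)
  also have "\<dots> = (\<Sum>y\<in>S. q y * (d y)\<^sup>2) - 2 * z * z + z\<^sup>2 * (\<Sum>y\<in>S. q y)"
    by (simp add: sum.distrib sum_subtractf sum_distrib_left z_def)
  also have "\<dots> = (\<Sum>y\<in>S. q y * (d y)\<^sup>2) - z\<^sup>2"
    using assms(3) by (simp add: power2_eq_square)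
  finally show ?thesis unfolding z_def by simp
qed

lemma (in prob_space) var_bound:
  fixes q V :: "'a \<Rightarrow> 's::finite \<Rightarrow> real"
  assumes ind: "indep_var (Pi\<^sub>M UNIV (\<lambda>_. borel)) q (Pi\<^sub>M UNIV (\<lambda>_. borel)) V"
    and qn: "\<And>\<omega> y. \<omega> \<in> space M \<Longrightarrow> 0 \<le> q \<omega> y"
    and qs: "\<And>\<omega>. \<omega> \<in> space M \<Longrightarrow> (\<Sum>y\<in>UNIV. q \<omega> y) = 1"
    and Vb: "\<And>\<omega> y. \<omega> \<in> space M \<Longrightarrow> \<bar>V \<omega> y\<bar> \<le> B"
  shows "var_of M (\<lambda>\<omega>. \<Sum>y\<in>UNIV. q \<omega> y * V \<omega> y)
     \<le> var_of M (\<lambda>\<omega>. \<Sum>y\<in>UNIV. q \<omega> y * (\<integral>\<omega>'. V \<omega>' y \<partial>M))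
        + (\<Sum>y\<in>UNIV. (\<integral>\<omega>. q \<omega> y \<partial>M) * var_of M (\<lambda>\<omega>. V \<omega> y))"
proof -
  have rq: "q \<in> measurable M (Pi\<^sub>M UNIV (\<lambda>_. borel))" using indep_var_rv1[OF ind] .
  have rV: "V \<in> measurable M (Pi\<^sub>M UNIV (\<lambda>_. borel))" using indep_var_rv2[OF ind] .
  have mq[measurable]: "(\<lambda>\<omega>. q \<omega> y) \<in> borel_measurable M" for y
    using measurable_comp[OF rq measurable_component_singleton[of y UNIV "\<lambda>_. borel"]] by (simp add: o_def)
  have mV[measurable]: "(\<lambda>\<omega>. V \<omega> y) \<in> borel_measurable M" for y
    using measurable_comp[OF rV measurable_component_singleton[of y UNIV "\<lambda>_. borel"]] by (simp add: o_def)
  have bq: "bdd_on M (\<lambda>\<omega>. q \<omega> y)" for y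
  proof -
    have "\<forall>\<omega>\<in>space M. \<bar>q \<omega> y\<bar> \<le> 1"
    proof
      fix \<omega> assume w: "\<omega> \<in> space M"
      have "q \<omega> y \<le> (\<Sum>y\<in>UNIV. q \<omega> y)" by (rule member_le_sum) (auto intro: qn[OF w])
      then show "\<bar>q \<omega> y\<bar> \<le> 1" using qs[OF w] qn[OF w, of y] by simp
    qed
    then show ?thesis unfolding bdd_on_def by blast
  qed
  have bV: "bdd_on M (\<lambda>\<omega>. V \<omega> y)" for y
    unfolding bdd_on_def using Vb by blast
  define m where "m y = (\<integral>\<omega>. V \<omega> y \<partial>M)" for y
  define D where "D \<omega> y = V \<omega> y - m y" for \<omega> y
  define Y where "Y \<omega> = (\<Sum>y\<in>UNIV. q \<omega> y * m y)" for \<omega>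
  define EY where "EY = (\<integral>\<omega>. Y \<omega> \<partial>M)"
  define Z where "Z \<omega> = (\<Sum>y\<in>UNIV. q \<omega> y * D \<omega> y)" for \<omega>
  have mD[measurable]: "(\<lambda>\<omega>. D \<omega> y) \<in> borel_measurable M" for y unfolding D_def by measurable
  have bD: "bdd_on M (\<lambda>\<omega>. D \<omega> y)" for y unfolding D_def by (intro bdd_intros bV)
  have mY[measurable]: "Y \<in> borel_measurable M" unfolding Y_def by measurable
  have bY: "bdd_on M Y" unfolding Y_def by (intro bdd_intros bq) auto
  have mZ[measurable]: "Z \<in> borel_measurable M" unfolding Z_def by measurable
  have bZ: "bdd_on M Z" unfolding Z_def by (intro bdd_intros bq bD) auto
  have fact: "(\<integral>\<omega>. F (q \<omega>) * G (V \<omega>) \<partial>M) = (\<integral>\<omega>. F (q \<omega>) \<partial>M) * (\<integral>\<omega>. G (V \<omega>) \<partial>M)"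
    if F: "F \<in> borel_measurable (Pi\<^sub>M UNIV (\<lambda>_. borel))" and G: "G \<in> borel_measurable (Pi\<^sub>M UNIV (\<lambda>_. borel))"
      and bF: "bdd_on M (\<lambda>\<omega>. F (q \<omega>))" and bG: "bdd_on M (\<lambda>\<omega>. G (V \<omega>))" for F G
  proof -
    have i: "indep_var borel (F \<circ> q) borel (G \<circ> V)" by (rule indep_var_compose[OF ind F G])
    have iF: "integrable M (F \<circ> q)"
      using integrable_bdd[OF measurable_comp[OF rq F]] bF by (simp add: o_def)
    have iG: "integrable M (G \<circ> V)"
      using integrable_bdd[OF measurable_comp[OF rV G]] bG by (simp add: o_def)
    show ?thesis using indep_var_lebesgue_integral[OF i iF iG] by (simp add: o_def)
  qed
  have ED: "(\<integral>\<omega>. D \<omega> y \<partial>M) = 0" for y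
    unfolding D_def m_def using integrable_bdd[OF mV bV] by (simp add: prob_space)
  have int: "integrable M f" if "f \<in> borel_measurable M" "bdd_on M f" for f
    using integrable_bdd that by blast
  have fqD: "(\<integral>\<omega>. q \<omega> y * D \<omega> y \<partial>M) = 0" for y
  proof -
    have "(\<integral>\<omega>. q \<omega> y * D \<omega> y \<partial>M) = (\<integral>\<omega>. q \<omega> y \<partial>M) * (\<integral>\<omega>. D \<omega> y \<partial>M)"
      using fact[of "\<lambda>f. f y" "\<lambda>v. v y - m y"] unfolding D_def
      by (simp add: bq bV bdd_intros)
    then show ?thesis using ED by simp
  qed
  have EZ: "(\<integral>\<omega>. Z \<omega> \<partial>M) = 0"
    unfolding Z_def
    by (subst Bochner_Integration.integral_sum) (auto intro!: int bdd_intros bq bD simp: fqD)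
  have X: "(\<Sum>y\<in>UNIV. q \<omega> y * V \<omega> y) = Y \<omega> + Z \<omega>" for \<omega>
    unfolding Y_def Z_def D_def by (simp add: sum.distrib[symmetric] algebra_simps)
  have EX: "(\<integral>\<omega>. Y \<omega> + Z \<omega> \<partial>M) = EY"
    unfolding EY_def using EZ by (simp add: int bY bZ)
  have cross: "(\<integral>\<omega>. (Y \<omega> - EY) * Z \<omega> \<partial>M) = 0"
  proof -
    have "(\<integral>\<omega>. (Y \<omega> - EY) * Z \<omega> \<partial>M) = (\<Sum>y\<in>UNIV. \<integral>\<omega>. ((Y \<omega> - EY) * q \<omega> y) * D \<omega> y \<partial>M)"
      unfolding Z_def sum_distrib_left mult.assoc
      by (subst Bochner_Integration.integral_sum) (auto intro!: int bdd_intros bq bD bY)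
    also have "\<dots> = (\<Sum>y\<in>UNIV. (\<integral>\<omega>. (Y \<omega> - EY) * q \<omega> y \<partial>M) * (\<integral>\<omega>. D \<omega> y \<partial>M))"
    proof (rule sum.cong)
      fix y
      show "(\<integral>\<omega>. ((Y \<omega> - EY) * q \<omega> y) * D \<omega> y \<partial>M) = (\<integral>\<omega>. (Y \<omega> - EY) * q \<omega> y \<partial>M) * (\<integral>\<omega>. D \<omega> y \<partial>M)"
        using fact[of "\<lambda>f. ((\<Sum>y\<in>UNIV. f y * m y) - EY) * f y" "\<lambda>v. v y - m y"] unfolding D_def Y_def
        by (simp add: bq bV bY[unfolded Y_def] bdd_intros)
    qed simp
    finally show ?thesis using ED by simp
  qed
  have "var_of M (\<lambda>\<omega>. \<Sum>y\<in>UNIV. q \<omega> y * V \<omega> y) = (\<integral>\<omega>. (Y \<omega> - EY + Z \<omega>)\<^sup>2 \<partial>M)"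
    unfolding var_of_def X EX by (simp add: algebra_simps)
  also have "\<dots> = (\<integral>\<omega>. (Y \<omega> - EY)\<^sup>2 + 2 * ((Y \<omega> - EY) * Z \<omega>) + (Z \<omega>)\<^sup>2 \<partial>M)"
    by (intro Bochner_Integration.integral_cong refl) (simp add: power2_eq_square algebra_simps)
  also have "\<dots> = (\<integral>\<omega>. (Y \<omega> - EY)\<^sup>2 \<partial>M) + 2 * (\<integral>\<omega>. (Y \<omega> - EY) * Z \<omega> \<partial>M) + (\<integral>\<omega>. (Z \<omega>)\<^sup>2 \<partial>M)"
    by (simp add: int bdd_intros bY bZ)
  also have "\<dots> = var_of M Y + (\<integral>\<omega>. (Z \<omega>)\<^sup>2 \<partial>M)"
    using cross unfolding var_of_def EY_def by simp
  also have "(\<integral>\<omega>. (Z \<omega>)\<^sup>2 \<partial>M) \<le> (\<integral>\<omega>. (\<Sum>y\<in>UNIV. q \<omega> y * (D \<omega> y)\<^sup>2) \<partial>M)"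
  proof (rule integral_mono)
    show "integrable M (\<lambda>\<omega>. (Z \<omega>)\<^sup>2)" by (intro int bdd_intros bZ) measurable
    show "integrable M (\<lambda>\<omega>. (\<Sum>y\<in>UNIV. q \<omega> y * (D \<omega> y)\<^sup>2))"
      by (intro int bdd_intros bq bD) auto
    fix \<omega> assume w: "\<omega> \<in> space M"
    show "(Z \<omega>)\<^sup>2 \<le> (\<Sum>y\<in>UNIV. q \<omega> y * (D \<omega> y)\<^sup>2)"
      unfolding Z_def by (rule weighted_sq) (auto intro: qn[OF w] qs[OF w])
  qed
  also have "(\<integral>\<omega>. (\<Sum>y\<in>UNIV. q \<omega> y * (D \<omega> y)\<^sup>2) \<partial>M) = (\<Sum>y\<in>UNIV. (\<integral>\<omega>. q \<omega> y \<partial>M) * var_of M (\<lambda>\<omega>. V \<omega> y))"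
  proof -
    have "(\<integral>\<omega>. (\<Sum>y\<in>UNIV. q \<omega> y * (D \<omega> y)\<^sup>2) \<partial>M) = (\<Sum>y\<in>UNIV. \<integral>\<omega>. q \<omega> y * (D \<omega> y)\<^sup>2 \<partial>M)"
      by (subst Bochner_Integration.integral_sum) (auto intro!: int bdd_intros bq bD)
    also have "\<dots> = (\<Sum>y\<in>UNIV. (\<integral>\<omega>. q \<omega> y \<partial>M) * var_of M (\<lambda>\<omega>. V \<omega> y))"
    proof (rule sum.cong)
      fix y
      show "(\<integral>\<omega>. q \<omega> y * (D \<omega> y)\<^sup>2 \<partial>M) = (\<integral>\<omega>. q \<omega> y \<partial>M) * var_of M (\<lambda>\<omega>. V \<omega> y)"
        using fact[of "\<lambda>f. f y" "\<lambda>v. (v y - m y)\<^sup>2"] unfolding D_def var_of_def m_def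
        by (simp add: bq bV bdd_intros)
    qed simp
    finally show ?thesis .
  qed
  also have "var_of M Y = var_of M (\<lambda>\<omega>. \<Sum>y\<in>UNIV. q \<omega> y * (\<integral>\<omega>'. V \<omega>' y \<partial>M))"
    unfolding Y_def m_def ..
  finally show ?thesis by simp
qed



lemma var_of_cong:
  assumes "\<And>\<omega>. \<omega> \<in> space M \<Longrightarrow> f \<omega> = g \<omega>"
  shows "var_of M f = var_of M g"
proof -
  have e: "(\<integral>\<omega>. f \<omega> \<partial>M) = (\<integral>\<omega>. g \<omega> \<partial>M)" by (rule Bochner_Integration.integral_cong) (auto simp: assms)
  show ?thesis unfolding var_of_def e by (rule Bochner_Integration.integral_cong) (auto simp: assms)
qed

lemma var_of_nonneg: "0 \<le> var_of M f"
  unfolding var_of_def by (rule Bochner_Integration.integral_nonneg) simp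

lemma var_of_affine:
  assumes "prob_space M" "integrable M f"
  shows "var_of M (\<lambda>\<omega>. c + g * f \<omega>) = g\<^sup>2 * var_of M f"
proof -
  interpret prob_space M by fact
  have e: "(\<integral>\<omega>. c + g * f \<omega> \<partial>M) = c + g * (\<integral>\<omega>. f \<omega> \<partial>M)"
    using assms(2) by (simp add: prob_space)
  have "var_of M (\<lambda>\<omega>. c + g * f \<omega>) = (\<integral>\<omega>. g\<^sup>2 * (f \<omega> - (\<integral>\<omega>. f \<omega> \<partial>M))\<^sup>2 \<partial>M)"
    unfolding var_of_def e by (rule Bochner_Integration.integral_cong) (auto simp: power2_eq_square algebra_simps)
  also have "\<dots> = g\<^sup>2 * var_of M f" unfolding var_of_def by simp
  finally show ?thesis .
qed

lemma trans_bound: "is_transition p \<Longrightarrow> 0 \<le> p s a y \<and> p s a y \<le> 1"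
proof -
  assume t: "is_transition p"
  have nn: "\<forall>y. 0 \<le> p s a y" and s1: "(\<Sum>y\<in>UNIV. p s a y) = 1"
    using t unfolding is_transition_def by auto
  have "p s a y \<le> (\<Sum>y\<in>UNIV. p s a y)" by (rule member_le_sum) (auto simp: nn)
  then show ?thesis using nn s1 by simp
qed

lemma key:
  fixes M :: "'w measure"
    and P :: "'w \<Rightarrow> 's::finite \<Rightarrow> 'a::finite \<Rightarrow> 's \<Rightarrow> real"
    and r :: "'s \<Rightarrow> 'a \<Rightarrow> real"
  assumes prob: "prob_space M"
    and gamma: "0 \<le> \<gamma>" "\<gamma> < 1"
    and meas: "\<And>s a s'. (\<lambda>\<omega>. P \<omega> s a s') \<in> borel_measurable M"
    and trans: "\<forall>\<omega>\<in>space M. is_transition (P \<omega>)"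
    and A1: "prob_space.indep_vars M (\<lambda>_. Pi\<^sub>M UNIV (\<lambda>_. Pi\<^sub>M UNIV (\<lambda>_. borel)))
               (\<lambda>x \<omega>. P \<omega> x) UNIV"
    and ac: "\<forall>\<omega>\<in>space M. acyclic_mdp T rk r (P \<omega>)"
    and pol: "is_policy \<pi>"
  shows "value_var M P \<gamma> r \<pi> s \<le> \<gamma>\<^sup>2 * local_unc M P \<gamma> r \<pi> s
           + \<gamma>\<^sup>2 * (\<Sum>a\<in>UNIV. \<Sum>s'\<in>UNIV. \<pi> s a * mean_trans M P s a s' * value_var M P \<gamma> r \<pi> s')"
proof -
  interpret prob_space M by fact
  define V where "V \<omega> y = value_fun \<gamma> r \<pi> (P \<omega>) y" for \<omega> y
  define B where "B = Rb \<pi> r / (1 - \<gamma>)"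
  have rvx: "(\<lambda>\<omega>. P \<omega> x) \<in> measurable M Mx" for x
    using A1 unfolding indep_vars_def by auto
  have mP: "(\<lambda>\<omega>. P \<omega>) \<in> measurable M (Pi\<^sub>M UNIV (\<lambda>_. Mx))"
    using measurable_PiM_single'[of UNIV "\<lambda>x \<omega>. P \<omega> x" M "\<lambda>_. Mx"] rvx
    by (simp add: space_PiM)
  have mV: "(\<lambda>\<omega>. V \<omega> y) \<in> borel_measurable M" for y
    unfolding V_def using measurable_comp[OF mP vf_meas] by (simp add: o_def)
  have bV: "\<bar>V \<omega> y\<bar> \<le> B" if "\<omega> \<in> space M" for \<omega> y
    unfolding V_def B_def using value_bound[OF pol _ gamma] trans that by blast
  have Pb: "0 \<le> P \<omega> x a y \<and> P \<omega> x a y \<le> 1" if "\<omega> \<in> space M" for \<omega> x a y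
    using trans_bound trans that by blast
  have Pint: "integrable M (\<lambda>\<omega>. P \<omega> x a y)" for x a y
    by (rule integrable_bdd[OF meas]) (unfold bdd_on_def, use Pb in \<open>auto intro!: exI[of _ 1]\<close>)
  have pbar_nn: "0 \<le> mean_trans M P x a y" for x a y
    unfolding mean_trans_def by (rule Bochner_Integration.integral_nonneg) (use Pb in auto)
  have U_def': "value_var M P \<gamma> r \<pi> y = var_of M (\<lambda>\<omega>. V \<omega> y)" for y
    unfolding value_var_def V_def ..
  have pi_nn: "0 \<le> \<pi> x a" for x a using pol unfolding is_policy_def by auto
  have rhs_nn: "0 \<le> \<gamma>\<^sup>2 * local_unc M P \<gamma> r \<pi> s
           + \<gamma>\<^sup>2 * (\<Sum>a\<in>UNIV. \<Sum>s'\<in>UNIV. \<pi> s a * mean_trans M P s a s' * value_var M P \<gamma> r \<pi> s')"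
    unfolding local_unc_def value_var_def
    by (intro add_nonneg_nonneg mult_nonneg_nonneg sum_nonneg var_of_nonneg pi_nn pbar_nn) auto
  show ?thesis
  proof (cases "s \<in> T")
    case True
    have "value_var M P \<gamma> r \<pi> s = var_of M (\<lambda>\<omega>. 0)"
      unfolding U_def' by (rule var_of_cong) (use vf_terminal[OF pol _ _ gamma True] trans ac in \<open>auto simp: V_def\<close>)
    also have "\<dots> = 0" unfolding var_of_def by simp
    finally show ?thesis using rhs_nn by simp
  next
    case False
    define c0 :: "'a \<Rightarrow> 's \<Rightarrow> real" where "c0 = (\<lambda>a y. if y = s then 1 else 0)"
    define q where "q \<omega> y = qq \<pi> (P \<omega>) s y" for \<omega> y
    define Pt where "Pt \<omega> = (\<lambda>x. if x = s then c0 else P \<omega> x)" for \<omega>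
    define Vt where "Vt \<omega> y = value_fun \<gamma> r \<pi> (Pt \<omega>) y" for \<omega> y
    have c0t: "is_transition (\<lambda>x::'s. c0)" unfolding is_transition_def c0_def by simp
    have Ptt: "is_transition (Pt \<omega>)" if "\<omega> \<in> space M" for \<omega>
      using trans that c0t unfolding is_transition_def Pt_def by auto
    have Pzero: "P \<omega> s a y = 0" if "\<omega> \<in> space M" "\<not> rk y < rk s" for \<omega> a y
    proof (rule ccontr)
      assume "P \<omega> s a y \<noteq> 0"
      then have "0 < P \<omega> s a y" using Pb[OF that(1)] by (simp add: order_less_le)
      then have "rk y < rk s" using ac that(1) False unfolding acyclic_mdp_def by blast
      then show False using that(2) by simp
    qed
    have qzero: "q \<omega> y = 0" if "\<omega> \<in> space M" "\<not> rk y < rk s" for \<omega> y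
      unfolding q_def qq_def using Pzero[OF that] by simp
    have VtV: "Vt \<omega> y = V \<omega> y" if "\<omega> \<in> space M" "rk y < rk s" for \<omega> y
      unfolding Vt_def V_def
    proof (rule vf_local[where T=T and rk=rk])
      show "is_transition (P \<omega>)" using trans that by blast
      show "acyclic_mdp T rk r (P \<omega>)" using ac that by blast
      fix x assume "rk x \<le> rk y"
      then have "x \<noteq> s" using that(2) by auto
      then show "Pt \<omega> x = P \<omega> x" unfolding Pt_def by simp
    qed (rule pol)
    have qVt: "(\<Sum>y\<in>UNIV. q \<omega> y * V \<omega> y) = (\<Sum>y\<in>UNIV. q \<omega> y * Vt \<omega> y)" if "\<omega> \<in> space M" for \<omega>
    proof (rule sum.cong)
      fix y show "q \<omega> y * V \<omega> y = q \<omega> y * Vt \<omega> y"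
        using qzero[OF that, of y] VtV[OF that, of y] by (cases "rk y < rk s") auto
    qed simp
    have ind0: "indep_var (Pi\<^sub>M {s} (\<lambda>_. Mx)) (\<lambda>\<omega>. restrict (\<lambda>i. P \<omega> i) {s})
                  (Pi\<^sub>M (UNIV - {s}) (\<lambda>_. Mx)) (\<lambda>\<omega>. restrict (\<lambda>i. P \<omega> i) (UNIV - {s}))"
      by (rule indep_var_restrict[OF A1]) auto
    define Q1 where "Q1 f = (\<lambda>y. \<Sum>a\<in>UNIV. \<pi> s a * f s a y)" for f :: "'s \<Rightarrow> 'a \<Rightarrow> 's \<Rightarrow> real"
    define E where "E f = (\<lambda>x. if x = s then c0 else f x)" for f :: "'s \<Rightarrow> 'a \<Rightarrow> 's \<Rightarrow> real"
    define Q2 where "Q2 f = (\<lambda>y. value_fun \<gamma> r \<pi> (E f) y)" for f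
    have mQ1: "Q1 \<in> measurable (Pi\<^sub>M {s} (\<lambda>_. Mx)) (Pi\<^sub>M UNIV (\<lambda>_. borel))"
      unfolding Q1_def
      by (rule measurable_PiM_single')
         (auto intro!: borel_measurable_sum borel_measurable_times borel_measurable_const comp3_meas_gen simp: space_PiM)
    have mE: "E \<in> measurable (Pi\<^sub>M (UNIV - {s}) (\<lambda>_. Mx)) (Pi\<^sub>M UNIV (\<lambda>_. Mx))"
      unfolding E_def
    proof (rule measurable_PiM_single')
      fix i :: 's
      show "(\<lambda>f. if i = s then c0 else f i) \<in> measurable (Pi\<^sub>M (UNIV - {s}) (\<lambda>_. Mx)) Mx"
        by (cases "i = s") (auto intro: measurable_component_singleton simp: space_PiM)
    qed (auto simp: space_PiM)
    have mQ2: "Q2 \<in> measurable (Pi\<^sub>M (UNIV - {s}) (\<lambda>_. Mx)) (Pi\<^sub>M UNIV (\<lambda>_. borel))"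
      unfolding Q2_def
      by (rule measurable_PiM_single')
         (auto intro!: measurable_comp[OF mE vf_meas, unfolded o_def] simp: space_PiM)
    have ind: "indep_var (Pi\<^sub>M UNIV (\<lambda>_. borel)) q (Pi\<^sub>M UNIV (\<lambda>_. borel)) Vt"
    proof -
      have i: "indep_var (Pi\<^sub>M UNIV (\<lambda>_. borel)) (Q1 \<circ> (\<lambda>\<omega>. restrict (\<lambda>i. P \<omega> i) {s}))
                  (Pi\<^sub>M UNIV (\<lambda>_. borel)) (Q2 \<circ> (\<lambda>\<omega>. restrict (\<lambda>i. P \<omega> i) (UNIV - {s})))"
        by (rule indep_var_compose[OF ind0 mQ1 mQ2])
      have e1: "Q1 \<circ> (\<lambda>\<omega>. restrict (\<lambda>i. P \<omega> i) {s}) = q"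
        by (auto simp: fun_eq_iff Q1_def q_def qq_def)
      have e2: "Q2 \<circ> (\<lambda>\<omega>. restrict (\<lambda>i. P \<omega> i) (UNIV - {s})) = Vt"
      proof -
        have h: "E (restrict (\<lambda>i. P \<omega> i) (UNIV - {s})) = Pt \<omega>" for \<omega>
          by (auto simp: fun_eq_iff E_def Pt_def)
        show ?thesis by (simp add: o_def Q2_def h fun_eq_iff Vt_def)
      qed
      show ?thesis using i unfolding e1 e2 .
    qed
    have qn: "0 \<le> q \<omega> y" if "\<omega> \<in> space M" for \<omega> y
      unfolding q_def using qq_nonneg[OF pol] trans that by blast
    have qs: "(\<Sum>y\<in>UNIV. q \<omega> y) = 1" if "\<omega> \<in> space M" for \<omega>
      unfolding q_def using qq_sum[OF pol] trans that by blast
    have Vtb: "\<bar>Vt \<omega> y\<bar> \<le> B" if "\<omega> \<in> space M" for \<omega> y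
      unfolding Vt_def B_def using value_bound[OF pol Ptt[OF that] gamma] by blast
    have vb: "var_of M (\<lambda>\<omega>. \<Sum>y\<in>UNIV. q \<omega> y * Vt \<omega> y)
       \<le> var_of M (\<lambda>\<omega>. \<Sum>y\<in>UNIV. q \<omega> y * (\<integral>\<omega>'. Vt \<omega>' y \<partial>M))
          + (\<Sum>y\<in>UNIV. (\<integral>\<omega>. q \<omega> y \<partial>M) * var_of M (\<lambda>\<omega>. Vt \<omega> y))"
      by (rule var_bound[OF ind qn qs Vtb])
    have rq: "q \<in> measurable M (Pi\<^sub>M UNIV (\<lambda>_. borel))" using indep_var_rv1[OF ind] .
    have rVt: "Vt \<in> measurable M (Pi\<^sub>M UNIV (\<lambda>_. borel))" using indep_var_rv2[OF ind] .
    have mq[measurable]: "(\<lambda>\<omega>. q \<omega> y) \<in> borel_measurable M" for y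
      using measurable_comp[OF rq measurable_component_singleton[of y UNIV "\<lambda>_. borel"]] by (simp add: o_def)
    have mVt[measurable]: "(\<lambda>\<omega>. Vt \<omega> y) \<in> borel_measurable M" for y
      using measurable_comp[OF rVt measurable_component_singleton[of y UNIV "\<lambda>_. borel"]] by (simp add: o_def)
    have bq: "bdd_on M (\<lambda>\<omega>. q \<omega> y)" for y
    proof -
      have "\<forall>\<omega>\<in>space M. \<bar>q \<omega> y\<bar> \<le> 1"
      proof
        fix \<omega> assume w: "\<omega> \<in> space M"
        have "q \<omega> y \<le> (\<Sum>y\<in>UNIV. q \<omega> y)" by (rule member_le_sum) (auto intro: qn[OF w])
        then show "\<bar>q \<omega> y\<bar> \<le> 1" using qs[OF w] qn[OF w, of y] by simp
      qed
      then show ?thesis unfolding bdd_on_def by blast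
    qed
    have bVt: "bdd_on M (\<lambda>\<omega>. Vt \<omega> y)" for y unfolding bdd_on_def using Vtb by blast
    have intS: "integrable M (\<lambda>\<omega>. \<Sum>y\<in>UNIV. q \<omega> y * Vt \<omega> y)"
      by (rule integrable_bdd) (measurable, intro bdd_intros bq bVt, auto)
    have "value_var M P \<gamma> r \<pi> s = var_of M (\<lambda>\<omega>. Rc \<pi> r s + \<gamma> * (\<Sum>y\<in>UNIV. q \<omega> y * Vt \<omega> y))"
      unfolding U_def'
    proof (rule var_of_cong)
      fix \<omega> assume w: "\<omega> \<in> space M"
      have "V \<omega> s = Rc \<pi> r s + \<gamma> * (\<Sum>y\<in>UNIV. q \<omega> y * V \<omega> y)"
        unfolding V_def q_def using bellman[OF pol _ gamma] trans w by blast
      then show "V \<omega> s = Rc \<pi> r s + \<gamma> * (\<Sum>y\<in>UNIV. q \<omega> y * Vt \<omega> y)" using qVt[OF w] by simp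
    qed
    also have "\<dots> = \<gamma>\<^sup>2 * var_of M (\<lambda>\<omega>. \<Sum>y\<in>UNIV. q \<omega> y * Vt \<omega> y)"
      by (rule var_of_affine[OF prob intS])
    finally have U_eq: "value_var M P \<gamma> r \<pi> s = \<gamma>\<^sup>2 * var_of M (\<lambda>\<omega>. \<Sum>y\<in>UNIV. q \<omega> y * Vt \<omega> y)" .
    have mt: "(\<integral>\<omega>'. Vt \<omega>' y \<partial>M) = mean_value M P \<gamma> r \<pi> y" if "rk y < rk s" for y
      unfolding mean_value_def
      by (rule Bochner_Integration.integral_cong) (use VtV that in \<open>auto simp: V_def\<close>)
    have lu: "var_of M (\<lambda>\<omega>. \<Sum>y\<in>UNIV. q \<omega> y * (\<integral>\<omega>'. Vt \<omega>' y \<partial>M)) = local_unc M P \<gamma> r \<pi> s"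
      unfolding local_unc_def
    proof (rule var_of_cong)
      fix \<omega> assume w: "\<omega> \<in> space M"
      have "(\<Sum>a\<in>UNIV. \<Sum>y\<in>UNIV. \<pi> s a * P \<omega> s a y * mean_value M P \<gamma> r \<pi> y)
          = (\<Sum>a\<in>UNIV. \<Sum>y\<in>UNIV. \<pi> s a * P \<omega> s a y * (\<integral>\<omega>'. Vt \<omega>' y \<partial>M))"
        by (intro sum.cong refl) (use mt Pzero[OF w] in \<open>metis mult_zero_right mult_zero_left\<close>)
      also have "\<dots> = (\<Sum>y\<in>UNIV. q \<omega> y * (\<integral>\<omega>'. Vt \<omega>' y \<partial>M))"
        unfolding q_def qq_def by (subst sum.swap) (simp add: sum_distrib_right)
      finally show "(\<Sum>y\<in>UNIV. q \<omega> y * (\<integral>\<omega>'. Vt \<omega>' y \<partial>M))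
          = (\<Sum>a\<in>UNIV. \<Sum>y\<in>UNIV. \<pi> s a * P \<omega> s a y * mean_value M P \<gamma> r \<pi> y)" by simp
    qed
    have Eq: "(\<integral>\<omega>. q \<omega> y \<partial>M) = (\<Sum>a\<in>UNIV. \<pi> s a * mean_trans M P s a y)" for y
      unfolding q_def qq_def mean_trans_def
      by (subst Bochner_Integration.integral_sum) (auto intro: Pint)
    have pbar0: "mean_trans M P s a y = 0" if "\<not> rk y < rk s" for a y
    proof -
      have "mean_trans M P s a y = (\<integral>\<omega>. 0 \<partial>M)"
        unfolding mean_trans_def by (rule Bochner_Integration.integral_cong) (use Pzero that in auto)
      then show ?thesis by simp
    qed
    have vt: "var_of M (\<lambda>\<omega>. Vt \<omega> y) = value_var M P \<gamma> r \<pi> y" if "rk y < rk s" for y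
      unfolding U_def' by (rule var_of_cong) (use VtV that in auto)
    have sv: "(\<Sum>y\<in>UNIV. (\<integral>\<omega>. q \<omega> y \<partial>M) * var_of M (\<lambda>\<omega>. Vt \<omega> y))
        = (\<Sum>a\<in>UNIV. \<Sum>y\<in>UNIV. \<pi> s a * mean_trans M P s a y * value_var M P \<gamma> r \<pi> y)"
    proof -
      have "(\<Sum>y\<in>UNIV. (\<integral>\<omega>. q \<omega> y \<partial>M) * var_of M (\<lambda>\<omega>. Vt \<omega> y))
          = (\<Sum>y\<in>UNIV. \<Sum>a\<in>UNIV. \<pi> s a * mean_trans M P s a y * var_of M (\<lambda>\<omega>. Vt \<omega> y))"
        unfolding Eq by (simp add: sum_distrib_right)
      also have "\<dots> = (\<Sum>y\<in>UNIV. \<Sum>a\<in>UNIV. \<pi> s a * mean_trans M P s a y * value_var M P \<gamma> r \<pi> y)"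
        by (intro sum.cong refl) (use vt pbar0 in \<open>metis mult_zero_right mult_zero_left\<close>)
      also have "\<dots> = (\<Sum>a\<in>UNIV. \<Sum>y\<in>UNIV. \<pi> s a * mean_trans M P s a y * value_var M P \<gamma> r \<pi> y)"
        by (rule sum.swap)
      finally show ?thesis .
    qed
    have "value_var M P \<gamma> r \<pi> s \<le> \<gamma>\<^sup>2 * (local_unc M P \<gamma> r \<pi> s
           + (\<Sum>a\<in>UNIV. \<Sum>s'\<in>UNIV. \<pi> s a * mean_trans M P s a s' * value_var M P \<gamma> r \<pi> s'))"
      unfolding U_eq using vb unfolding lu sv by (intro mult_left_mono) auto
    then show ?thesis by (simp add: algebra_simps)
  qed
qed

theorem corollary1:
  fixes M :: "'w measure"
    and P :: "'w \<Rightarrow> 's::finite \<Rightarrow> 'a::finite \<Rightarrow> 's \<Rightarrow> real"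
    and r :: "'s \<Rightarrow> 'a \<Rightarrow> real"
    and \<gamma> :: real
    and \<pi> :: "'s \<Rightarrow> 'a \<Rightarrow> real"
    and W :: "'s \<Rightarrow> real"
  assumes prob: "prob_space M"
    and gamma: "0 \<le> \<gamma>" "\<gamma> < 1"
    and meas: "\<And>s a s'. (\<lambda>\<omega>. P \<omega> s a s') \<in> borel_measurable M"
    and trans: "\<forall>\<omega>\<in>space M. is_transition (P \<omega>)"
    and A1: "prob_space.indep_vars M (\<lambda>_. Pi\<^sub>M UNIV (\<lambda>_. Pi\<^sub>M UNIV (\<lambda>_. borel)))
               (\<lambda>x \<omega>. P \<omega> x) UNIV"
    and A2: "\<exists>T rk. \<forall>\<omega>\<in>space M. acyclic_mdp T rk r (P \<omega>)"
    and pol: "is_policy \<pi>"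
    and W: "\<And>s. W s = \<gamma>\<^sup>2 * local_unc M P \<gamma> r \<pi> s
               + \<gamma>\<^sup>2 * (\<Sum>a\<in>UNIV. \<Sum>s'\<in>UNIV. \<pi> s a * mean_trans M P s a s' * W s')"
  shows "\<forall>s. value_var M P \<gamma> r \<pi> s \<le> W s"
proof -
  interpret prob_space M by fact
  obtain T rk where ac: "\<forall>\<omega>\<in>space M. acyclic_mdp T rk r (P \<omega>)" using A2 by blast
  define U where "U s = value_var M P \<gamma> r \<pi> s" for s
  define pb where "pb s a y = mean_trans M P s a y" for s a y
  define D where "D s = W s - U s" for s
  have Pb: "0 \<le> P \<omega> x a y \<and> P \<omega> x a y \<le> 1" if "\<omega> \<in> space M" for \<omega> x a y
    using trans_bound trans that by blast
  have Pint: "integrable M (\<lambda>\<omega>. P \<omega> x a y)" for x a y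
    by (rule integrable_bdd[OF meas]) (unfold bdd_on_def, use Pb in \<open>auto intro!: exI[of _ 1]\<close>)
  have pb_nn: "0 \<le> pb x a y" for x a y
    unfolding pb_def mean_trans_def by (rule Bochner_Integration.integral_nonneg) (use Pb in auto)
  have pb_sum: "(\<Sum>y\<in>UNIV. pb x a y) = 1" for x a
  proof -
    have "(\<Sum>y\<in>UNIV. pb x a y) = (\<integral>\<omega>. (\<Sum>y\<in>UNIV. P \<omega> x a y) \<partial>M)"
      unfolding pb_def mean_trans_def by (subst Bochner_Integration.integral_sum) (auto intro: Pint)
    also have "\<dots> = (\<integral>\<omega>. 1 \<partial>M)"
      by (rule Bochner_Integration.integral_cong) (use trans in \<open>auto simp: is_transition_def\<close>)
    finally show ?thesis by (simp add: prob_space)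
  qed
  have pi_nn: "0 \<le> \<pi> x a" for x a using pol unfolding is_policy_def by auto
  have pi_sum: "(\<Sum>a\<in>UNIV. \<pi> x a) = 1" for x using pol unfolding is_policy_def by auto
  have K: "U s \<le> \<gamma>\<^sup>2 * local_unc M P \<gamma> r \<pi> s + \<gamma>\<^sup>2 * (\<Sum>a\<in>UNIV. \<Sum>s'\<in>UNIV. \<pi> s a * pb s a s' * U s')" for s
    unfolding U_def pb_def by (rule key[OF prob gamma meas trans A1 ac pol])
  have Dineq: "\<gamma>\<^sup>2 * (\<Sum>a\<in>UNIV. \<Sum>s'\<in>UNIV. \<pi> s a * pb s a s' * D s') \<le> D s" for s
  proof -
    have "\<gamma>\<^sup>2 * (\<Sum>a\<in>UNIV. \<Sum>s'\<in>UNIV. \<pi> s a * pb s a s' * D s')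
        = \<gamma>\<^sup>2 * (\<Sum>a\<in>UNIV. \<Sum>s'\<in>UNIV. \<pi> s a * pb s a s' * W s') - \<gamma>\<^sup>2 * (\<Sum>a\<in>UNIV. \<Sum>s'\<in>UNIV. \<pi> s a * pb s a s' * U s')"
      unfolding D_def by (simp add: algebra_simps sum_subtractf)
    also have "\<dots> \<le> D s" using K[of s] W[of s] unfolding D_def pb_def by simp
    finally show ?thesis .
  qed
  define m where "m = Min (range D)"
  have m_le: "m \<le> D s" for s unfolding m_def by (rule Min_le) auto
  have "m \<in> range D" unfolding m_def by (rule Min_in) auto
  then obtain s0 where s0: "D s0 = m" by auto
  have "\<gamma>\<^sup>2 * m = \<gamma>\<^sup>2 * (\<Sum>a\<in>UNIV. \<Sum>s'\<in>UNIV. \<pi> s0 a * pb s0 a s' * m)"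
  proof -
    have "(\<Sum>a\<in>UNIV. \<Sum>s'\<in>UNIV. \<pi> s0 a * pb s0 a s' * m) = (\<Sum>a\<in>UNIV. \<pi> s0 a * (\<Sum>s'\<in>UNIV. pb s0 a s')) * m"
      by (simp add: sum_distrib_left sum_distrib_right mult.assoc)
    also have "\<dots> = m" by (simp add: pb_sum pi_sum)
    finally show ?thesis by simp
  qed
  also have "\<dots> \<le> \<gamma>\<^sup>2 * (\<Sum>a\<in>UNIV. \<Sum>s'\<in>UNIV. \<pi> s0 a * pb s0 a s' * D s')"
    by (intro mult_left_mono sum_mono mult_left_mono m_le mult_nonneg_nonneg pi_nn pb_nn) auto
  also have "\<dots> \<le> m" using Dineq[of s0] s0 by simp
  finally have "\<gamma>\<^sup>2 * m \<le> m" .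
  moreover have "\<gamma>\<^sup>2 < 1" using gamma by (simp add: power_less_one_iff abs_less_iff) 
  ultimately have "0 \<le> (1 - \<gamma>\<^sup>2) * m" "0 < 1 - \<gamma>\<^sup>2" by (simp_all add: algebra_simps)
  then have "0 \<le> m" by (simp add: zero_le_mult_iff)
  then show ?thesis using m_le unfolding D_def U_def by (metis diff_ge_0_iff_ge order_trans)
qed


end
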